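(* For every integer $N \ge 4$ and every $\Omega \in [-\pi,\pi]$, with $W = 4$ and the window $\mathcal W^\star$ defined in the context, the captured energy fraction satisfies $$E_{4,N}(\delta) = \sum_{n\in\mathcal W^\star}|y_n|^2 \;\ge\; \frac{80}{9\pi^2} \approx 0.9006 > 0.9 .$$ (The value $80/(9\pi^2)$ is the minimum over $\delta\in[0,\tfrac12]$ of $\sum_{n\in\mathcal W^\star}\operatorname{sinc}^2(n-\nu)$, attained at $\delta = 1/2$.)
   Context: Steering vector $\mathbf a(\Omega) = [1, e^{j\Omega}, \dots, e^{j(N-1)\Omega}]^\top$. Dirichlet kernel $D_N(\omega) = \frac1N\sum_{n=0}^{N-1}e^{j\omega n}$. Normalized DFT coefficients $y_n = D_N(\Omega - 2\pi n/N)$ for integers $n$ (so $\sum_{n=0}^{N-1}|y_n|^2=1$). $\operatorname{sinc}(x)=\sin(\pi x)/(\pi x)$. Put $\nu = N\Omega/(2\pi)$, $n_0=\mathrm{round}(\nu)$, $\delta = |\nu-n_0|\in[0,1/2]$. For $W=4$ the window is $\mathcal W^\star = \{n_0-1, n_0, n_0+1, n_0+2\}$ if $\nu = n_0+\delta$ and $\mathcal W^\star = \{n_0-2,n_0-1,n_0,n_0+1\}$ if $\nu = n_0-\delta$ (bins taken modulo $N$). *)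

theory Defs
  imports Complex_Main
begin

definition dirichlet :: "nat \<Rightarrow> real \<Rightarrow> complex" where
  "dirichlet N w = (1 / of_nat N) * (\<Sum>n<N. cis (w * real n))"

definition dft_coeff :: "nat \<Rightarrow> real \<Rightarrow> int \<Rightarrow> complex" where
  "dft_coeff N \<Omega> n = dirichlet N (\<Omega> - 2 * pi * real_of_int n / real N)"

text \<open>nu = N Omega / (2 pi); n0 = round nu (library round: floor (x + 1/2)).\<close>
definition nu :: "nat \<Rightarrow> real \<Rightarrow> real" where
  "nu N \<Omega> = real N * \<Omega> / (2 * pi)"

text \<open>The W = 4 window (as a set of integer bins, to be reduced modulo N).\<close>
definition window4 :: "nat \<Rightarrow> real \<Rightarrow> int set" where
  "window4 N \<Omega> = (let n0 = round (nu N \<Omega>) in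
     if nu N \<Omega> \<ge> real_of_int n0 then {n0 - 1 .. n0 + 2} else {n0 - 2 .. n0 + 1})"

definition energy4 :: "nat \<Rightarrow> real \<Rightarrow> real" where
  "energy4 N \<Omega> = (\<Sum>n\<in>window4 N \<Omega>. (cmod (dft_coeff N \<Omega> (n mod int N)))\<^sup>2)"

end

theory Submission
  imports Defs "HOL-Analysis.Analysis"
begin

lemma polyT:
  fixes v :: real assumes "0 \<le> v" "v \<le> 1/16"
  shows "0 \<le> (957/20) * v^0 + (-67751191/72000) * v^1 + (342476983/90000) * v^2 + (-12250081/4500) * v^3 + (974169/625) * v^4"
proof -
  define s where "s = 16 * v"
  have s0: "0 \<le> s" "0 \<le> 1 - s" using assms by (auto simp: s_def)
  have eq: "(957/20) * v^0 + (-67751191/72000) * v^1 + (342476983/90000) * v^2 + (-12250081/4500) * v^3 + (974169/625) * v^4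
     = (957/20) * (1-s)^4 * s^0 + (152741609/1152000) * (1-s)^3 * s^1 + (2892189523/23040000) * (1-s)^2 * s^2 + (1352567873/30720000) * (1-s)^1 * s^3 + (133604501/40960000) * (1-s)^0 * s^4"
    unfolding s_def by algebra
  show ?thesis unfolding eq using s0 by (intro add_nonneg_nonneg mult_nonneg_nonneg zero_le_power) auto
qed

lemma polyP1:
  fixes w :: real assumes "0 \<le> w" "w \<le> 1/16"
  shows "0 \<le> (11033/11250) * w^0 + (-160381/15625) * w^1 + (-3119028003/50000000) * w^2 + (50394535373/1000000000) * w^3 + (41144968319/625000000) * w^4 + (4575558897/312500000) * w^5"
proof -
  define s where "s = 16 * w"
  have s0: "0 \<le> s" "0 \<le> 1 - s" using assms by (auto simp: s_def)
  have eq: "(11033/11250) * w^0 + (-160381/15625) * w^1 + (-3119028003/50000000) * w^2 + (50394535373/1000000000) * w^3 + (41144968319/625000000) * w^4 + (4575558897/312500000) * w^5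
     = (11033/11250) * (1-s)^5 * s^0 + (9589571/2250000) * (1-s)^4 * s^1 + (806093688773/115200000000) * (1-s)^3 * s^2 + (193139648456437/36864000000000) * (1-s)^2 * s^3 + (601638392182811/368640000000000) * (1-s)^1 * s^4 + (320967124446401/2949120000000000) * (1-s)^0 * s^5"
    unfolding s_def by algebra
  show ?thesis unfolding eq using s0 by (intro add_nonneg_nonneg mult_nonneg_nonneg zero_le_power) auto
qed
lemma pi_sq_bounds: "98696/10000 \<le> pi^2" "pi^2 \<le> 987/100"
proof -
  have "(3.141592653588::real)^2 \<le> pi^2" using pi_approx(1) by (intro power_mono) auto
  moreover have "(98696/10000::real) \<le> (3.141592653588::real)^2" by (simp add: power2_eq_square)
  ultimately show "98696/10000 \<le> pi^2" by linarith
  have "pi^2 \<le> (3.1415926535899::real)^2" using pi_approx(2) pi_gt_zero by (intro power_mono) auto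
  moreover have "(3.1415926535899::real)^2 \<le> 987/100" by (simp add: power2_eq_square)
  ultimately show "pi^2 \<le> 987/100" by linarith
qed

lemma regII_rat:
  fixes v :: real assumes v: "0 \<le> v" "v \<le> 1/16"
  shows "80/9 \<le> (1 - 987/200 * v)^2 * (8*(1+4* v)/(1-4* v)^2 + 2*(9/4+v)/(9/4-v)^2)"
proof -
  have A: "(1-4* v)^2 > 0" and B: "(9/4-v)^2 > 0" using v by auto
  have eq: "(1 - 987/200 * v)^2 * (8*(1+4* v)*(9/4-v)^2 + 2*(9/4+v)*(1-4* v)^2) - 80/9 * (1-4* v)^2 * (9/4-v)^2
     = v * ((957/20) * v^0 + (-67751191/72000) * v^1 + (342476983/90000) * v^2 + (-12250081/4500) * v^3 + (974169/625) * v^4)"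
    by algebra
  have "0 \<le> v * ((957/20) * v^0 + (-67751191/72000) * v^1 + (342476983/90000) * v^2 + (-12250081/4500) * v^3 + (974169/625) * v^4)"
    using polyT[OF v] v by simp
  then have "80/9 * ((1-4* v)^2 * (9/4-v)^2) \<le> (1 - 987/200 * v)^2 * (8*(1+4* v)*(9/4-v)^2 + 2*(9/4+v)*(1-4* v)^2)"
    using eq by (simp add: algebra_simps)
  moreover have "8*(1+4* v)/(1-4* v)^2 + 2*(9/4+v)/(9/4-v)^2 = (8*(1+4* v)*(9/4-v)^2 + 2*(9/4+v)*(1-4* v)^2) / ((1-4* v)^2 * (9/4-v)^2)"
    using A B by (simp add: field_simps)
  ultimately show ?thesis using A B by (simp add: field_simps)
qed

lemma cos_lower: "1 - x^2/2 \<le> cos (x::real)"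
proof -
  have "cos x = 1 - 2 * sin (x/2)^2" using cos_double_sin[of "x/2"] by simp
  moreover have "sin (x/2)^2 \<le> (x/2)^2"
    using abs_sin_x_le_abs_x[of "x/2"] by (metis abs_ge_zero power2_abs power_mono)
  ultimately show ?thesis by (simp add: power_divide)
qed

lemma regII:
  fixes u :: real assumes u: "0 \<le> u" "u \<le> 1/4"
  shows "80/9 \<le> cos (pi*u)^2 * (1/(1/2-u)^2 + 1/(3/2-u)^2 + 1/(1/2+u)^2 + 1/(3/2+u)^2)"
proof -
  define v where "v = u^2"
  have "u^2 \<le> (1/4)^2" using u by (intro power_mono) auto
  then have v: "0 \<le> v" "v \<le> 1/16" unfolding v_def by (auto simp: power2_eq_square)
  have c1: "1 - 987/200 * v \<le> cos (pi*u)"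
  proof -
    have "pi^2 * u^2 \<le> 987/100 * u^2" using pi_sq_bounds(2) by (rule mult_right_mono) simp
    then have "1 - 987/200 * v \<le> 1 - (pi*u)^2/2"
      by (simp add: v_def power_mult_distrib)
    then show ?thesis using cos_lower[of "pi*u"] by linarith
  qed
  have c0: "0 \<le> 1 - 987/200 * v" using v by simp
  have cc: "(1 - 987/200 * v)^2 \<le> cos (pi*u)^2" using c0 c1 by (intro power_mono)
  have S: "1/(1/2-u)^2 + 1/(3/2-u)^2 + 1/(1/2+u)^2 + 1/(3/2+u)^2 = 8*(1+4* v)/(1-4* v)^2 + 2*(9/4+v)/(9/4-v)^2"
  proof -
    have h1: "1/(1/2-u)^2 + 1/(1/2+u)^2 = 8*(1+4* v)/(1-4* v)^2"
    proof -
      have "1/2-u \<noteq> 0" "1/2+u \<noteq> 0" "1-4* v \<noteq> 0" using u v by auto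
      then show ?thesis unfolding v_def by (simp add: field_simps) (simp add: power2_eq_square algebra_simps)
    qed
    have h2: "1/(3/2-u)^2 + 1/(3/2+u)^2 = 2*(9/4+v)/(9/4-v)^2"
    proof -
      have "3/2-u \<noteq> 0" "3/2+u \<noteq> 0" "9/4-v \<noteq> 0" using u v by auto
      then show ?thesis unfolding v_def by (simp add: field_simps) (simp add: power2_eq_square algebra_simps)
    qed
    show ?thesis using h1 h2 by simp
  qed
  have pos: "0 \<le> 8*(1+4* v)/(1-4* v)^2 + 2*(9/4+v)/(9/4-v)^2" using v by simp
  show ?thesis unfolding S using regII_rat[OF v] mult_right_mono[OF cc pos] by linarith
qed


lemma sin_lower:
  fixes x :: real assumes "0 \<le> x" shows "x - x^3/6 - x^5/120 \<le> sin x"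
proof -
  have "\<bar>sin x - (\<Sum>m<5. sin_coeff m * x ^ m)\<bar> \<le> inverse (fact 5) * \<bar>x\<bar> ^ 5"
    by (rule Maclaurin_sin_bound)
  moreover have "(\<Sum>m<5. sin_coeff m * x ^ m) = x - x^3/6"
    by (simp add: lessThan_nat_numeral sin_coeff_def fact_numeral)
  ultimately have h: "\<bar>sin x - (x - x^3/6)\<bar> * 120 \<le> x^5" using assms by (simp add: fact_numeral)
  have "\<bar>sin x - (x - x^3/6)\<bar> \<le> x^5/120" using h by simp
  then have "-(sin x - (x - x^3/6)) \<le> x^5/120" by (simp only: abs_le_iff)
  then show ?thesis by simp
qed

lemma regI:
  fixes d :: real assumes d: "0 < d" "d \<le> 1/4"
  shows "80/9 \<le> sin (pi*d)^2 * (1/d^2 + 1/(1+d)^2 + 1/(1-d)^2 + 1/(2-d)^2)"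
proof -
  define w where "w = d^2"
  have "d^2 \<le> (1/4)^2" using d by (intro power_mono) auto
  then have w: "0 \<le> w" "w \<le> 1/16" unfolding w_def by (auto simp: power2_eq_square)
  define g where "g = 1 - 1645/1000 * w - 812/1000 * w^2"
  have g0: "0 \<le> g" unfolding g_def using w
  proof -
    have "w*w \<le> 1/16 * (1/16)" using w by (intro mult_mono) auto
    then have "w^2 \<le> 1/16 * 1/16" by (simp add: power2_eq_square)
    then show "0 \<le> 1 - 1645/1000 * w - 812/1000 * w^2" using w by linarith
  qed
  have p2: "pi^2 \<le> 987/100" "98696/10000 \<le> pi^2" using pi_sq_bounds by auto
  have p4: "pi^4 \<le> 9744/100"
  proof -
    have "pi^4 = pi^2 * pi^2" by (simp add: power4_eq_xxxx power2_eq_square)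
    also have "\<dots> \<le> 987/100 * (987/100)" using p2 by (intro mult_mono) auto
    finally show ?thesis by simp
  qed
  have sl: "pi * d * g \<le> sin (pi*d)"
  proof -
    have "pi * d * g \<le> pi * d * (1 - pi^2 * w / 6 - pi^4 * w^2/120)"
    proof -
      have "pi^2 * w \<le> 987/100 * w" using p2 w by (intro mult_right_mono) auto
      moreover have "pi^4 * w^2 \<le> 9744/100 * w^2" using p4 by (intro mult_right_mono) auto
      ultimately have "g \<le> 1 - pi^2 * w / 6 - pi^4 * w^2/120" unfolding g_def by linarith
      then show ?thesis using d by (intro mult_left_mono) auto
    qed
    also have "\<dots> = (pi*d) - (pi*d)^3/6 - (pi*d)^5/120"
      unfolding w_def by (simp add: algebra_simps power2_eq_square power3_eq_cube eval_nat_numeral)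
    also have "\<dots> \<le> sin (pi*d)" using d by (intro sin_lower) auto
    finally show ?thesis .
  qed
  have sq: "pi^2 * w * g^2 \<le> sin (pi*d)^2"
  proof -
    have "(pi * d * g)^2 \<le> sin (pi*d)^2" using sl g0 d by (intro power_mono) auto
    then show ?thesis unfolding w_def by (simp add: power_mult_distrib)
  qed
  have Sd: "(1 + 9/4 * w) / w \<le> 1/d^2 + 1/(1+d)^2 + 1/(1-d)^2 + 1/(2-d)^2"
  proof -
    have a1: "1 - 2*d \<le> 1/(1+d)^2"
    proof -
      have "(1 - 2*d) * (1+d)^2 \<le> 1" using d by (simp add: power2_eq_square algebra_simps)
      then show ?thesis using d by (simp add: field_simps)
    qed
    have a2: "1 + 2*d \<le> 1/(1-d)^2"
    proof -
      have "(1 + 2*d) * (1-d)^2 = 1 - 3*d^2 + 2*d^3" by (simp add: power2_eq_square power3_eq_cube algebra_simps)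
      moreover have "2*d^3 \<le> 3*d^2" using d by (simp add: power2_eq_square power3_eq_cube)
      ultimately have "(1 + 2*d) * (1-d)^2 \<le> 1" by simp
      moreover have "(1-d)^2 > 0" using d by simp
      ultimately show ?thesis by (simp add: field_simps)
    qed
    have a3: "1/4 \<le> 1/(2-d)^2"
    proof -
      have "(2-d)^2 \<le> 2^2" using d by (intro power_mono) auto
      then show ?thesis using d by (simp add: field_simps)
    qed
    have "(1 + 9/4 * w) / w = 1/d^2 + 9/4" using d unfolding w_def by (simp add: field_simps)
    then show ?thesis using a1 a2 a3 by linarith
  qed
  have wpos: "0 < w" using d unfolding w_def by simp
  have "80/9 \<le> 98696/10000 * g^2 * (1 + 9/4 * w)"
  proof -
    have "98696/10000 * g^2 * (1 + 9/4 * w) - 80/9 = (11033/11250) * w^0 + (-160381/15625) * w^1 + (-3119028003/50000000) * w^2 + (50394535373/1000000000) * w^3 + (41144968319/625000000) * w^4 + (4575558897/312500000) * w^5"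
      unfolding g_def by algebra
    then show ?thesis using polyP1[OF w] by linarith
  qed
  also have "\<dots> \<le> pi^2 * g^2 * (1 + 9/4 * w)"
    using p2 w by (intro mult_right_mono) auto
  also have "\<dots> = (pi^2 * w * g^2) * ((1 + 9/4 * w) / w)" using wpos by (simp add: field_simps)
  also have "\<dots> \<le> sin (pi*d)^2 * (1/d^2 + 1/(1+d)^2 + 1/(1-d)^2 + 1/(2-d)^2)"
    using sq Sd wpos w by (intro mult_mono) auto
  finally show ?thesis .
qed


lemma keyS:
  fixes d :: real assumes d: "0 < d" "d \<le> 1/2"
  shows "80/9 \<le> sin (pi*d)^2 * (1/d^2 + 1/(1+d)^2 + 1/(1-d)^2 + 1/(2-d)^2)"
proof (cases "d \<le> 1/4")
  case True then show ?thesis using regI d by auto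
next
  case False
  define u where "u = 1/2 - d"
  have u: "0 \<le> u" "u \<le> 1/4" using False d by (auto simp: u_def)
  have sc: "sin (pi*d) = cos (pi*u)" unfolding u_def by (simp add: sin_cos_eq algebra_simps)
  have e: "1 + d = 3/2 - u" "1 - d = 1/2 + u" "2 - d = 3/2 + u" by (auto simp: u_def)
  have e1: "d = 1/2 - u" by (simp add: u_def)
  have "80/9 \<le> cos (pi*u)^2 * (1/(1/2-u)^2 + 1/(3/2-u)^2 + 1/(1/2+u)^2 + 1/(3/2+u)^2)" by (rule regII[OF u])
  then show ?thesis unfolding e sc unfolding e1 .
qed

lemma cmod_cis_minus1: "cmod (cis a - 1)^2 = 4 * sin (a/2)^2"
proof -
  have "cmod (cis a - 1)^2 = (cos a - 1)^2 + sin a ^2" by (simp add: cmod_power2)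
  also have "\<dots> = 2 - 2 * cos a" using sin_cos_squared_add[of a] by (simp add: power2_eq_square algebra_simps)
  also have "cos a = 1 - 2 * sin (a/2)^2" using cos_double_sin[of "a/2"] by simp
  finally show ?thesis by simp
qed

lemma dirichlet_sq:
  assumes N: "N > 0" and s: "sin (w/2) \<noteq> 0"
  shows "cmod (dirichlet N w)^2 = sin (real N * w / 2)^2 / (real N^2 * sin (w/2)^2)"
proof -
  have ne: "cis w \<noteq> 1"
  proof
    assume "cis w = 1"
    then have "cmod (cis w - 1)^2 = 0" by simp
    then show False using s by (simp add: cmod_cis_minus1)
  qed
  have "(\<Sum>n<N. cis (w * real n)) = (\<Sum>n<N. (cis w)^n)"
  proof (intro sum.cong refl)
    fix k assume "k \<in> {..<N}"
    have "cis w ^ k = cis (real k * w)" by (rule Complex.DeMoivre)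
    then show "cis (w * real k) = cis w ^ k" by (simp add: mult.commute)
  qed
  also have "\<dots> = ((cis w)^N - 1) / (cis w - 1)" using ne by (rule geometric_sum)
  also have "(cis w)^N = cis (real N * w)" by (simp add: Complex.DeMoivre)
  finally have eq: "(\<Sum>n<N. cis (w * real n)) = (cis (real N * w) - 1) / (cis w - 1)" .
  have "cmod (dirichlet N w)^2 = (1 / real N)^2 * (cmod (cis (real N * w) - 1)^2 / cmod (cis w - 1)^2)"
    unfolding dirichlet_def eq by (simp add: norm_mult norm_divide power_mult_distrib power_divide)
  also have "\<dots> = (1 / real N)^2 * (4 * sin (real N * w / 2)^2 / (4 * sin (w/2)^2))"
    by (simp add: cmod_cis_minus1)
  also have "\<dots> = sin (real N * w / 2)^2 / (real N^2 * sin (w/2)^2)" using N s by (simp add: field_simps)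
  finally show ?thesis .
qed

lemma dirichlet_lower:
  assumes N: "N > 0" and s: "sin (w/2) \<noteq> 0"
  shows "sin (real N * w / 2)^2 / (real N^2 * (w/2)^2) \<le> cmod (dirichlet N w)^2"
proof -
  have "sin (w/2)^2 \<le> (w/2)^2" using abs_sin_x_le_abs_x[of "w/2"] by (metis abs_ge_zero power2_abs power_mono)
  moreover have "0 < sin (w/2)^2" using s by simp
  ultimately have "real N^2 * sin (w/2)^2 \<le> real N^2 * (w/2)^2" "0 < real N^2 * sin (w/2)^2" using N by auto
  then have "sin (real N * w / 2)^2 / (real N^2 * (w/2)^2) \<le> sin (real N * w / 2)^2 / (real N^2 * sin (w/2)^2)"
    by (intro divide_left_mono) auto
  then show ?thesis using dirichlet_sq[OF N s] by simp
qed

lemma aux_sq: "(N::nat) > 0 \<Longrightarrow> real N^2 * ((x / real N) * pi)^2 = pi^2 * x^2"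
  by (simp add: power_mult_distrib power_divide field_simps)

lemma y_lower:
  assumes N: "N > 0" and ni: "nu N \<Omega> - of_int n \<notin> \<int>"
  shows "sin (pi * (nu N \<Omega> - of_int n))^2 / (pi^2 * (nu N \<Omega> - of_int n)^2) \<le> cmod (dft_coeff N \<Omega> n)^2"
proof -
  define w where "w = \<Omega> - 2 * pi * real_of_int n / real N"
  have w2: "w/2 = ((nu N \<Omega> - of_int n) / real N) * pi" using N unfolding w_def nu_def by (simp add: field_simps)
  have Nw: "real N * w / 2 = pi * (nu N \<Omega> - of_int n)" using N unfolding w_def nu_def by (simp add: field_simps)
  have s: "sin (w/2) \<noteq> 0"
  proof
    assume "sin (w/2) = 0"
    then have "(nu N \<Omega> - of_int n) / real N \<in> \<int>" unfolding w2 sin_times_pi_eq_0 .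
    then obtain k where k: "(nu N \<Omega> - of_int n) / real N = of_int k" by (auto elim: Ints_cases)
    then have "nu N \<Omega> - of_int n = of_int (int N * k)" using N by (simp add: field_simps)
    then show False using ni by (metis Ints_of_int)
  qed
  have "real N^2 * (w/2)^2 = pi^2 * (nu N \<Omega> - of_int n)^2" using N unfolding w2 by (rule aux_sq)
  then show ?thesis using dirichlet_lower[OF N s] Nw unfolding dft_coeff_def w_def[symmetric] by simp
qed


lemma cis_shift: "cis (a + 2 * pi * real_of_int m) = cis a"
proof -
  have "cis a * cis (2 * pi * real_of_int m) = cis (a + 2 * pi * real_of_int m)" by (rule cis_mult)
  moreover have "cis (2 * pi * real_of_int m) = 1" by (rule cis_multiple_2pi) simp
  ultimately show ?thesis by (metis mult_1_right)
qed

lemma dirichlet_shift: "dirichlet N (w + 2 * pi * real_of_int q) = dirichlet N w"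
proof -
  have "cis ((w + 2 * pi * real_of_int q) * real k) = cis (w * real k)" for k :: nat
  proof -
    have "(w + 2 * pi * real_of_int q) * real k = w * real k + 2 * pi * real_of_int (q * int k)" by (simp add: algebra_simps)
    then show ?thesis by (simp only: cis_shift)
  qed
  then show ?thesis unfolding dirichlet_def by simp
qed

lemma dft_mod:
  assumes N: "N > 0" shows "dft_coeff N \<Omega> (n mod int N) = dft_coeff N \<Omega> n"
proof -
  have m: "n mod int N = n - int N * (n div int N)" by (metis minus_div_mult_eq_mod mult.commute)
  have h: "\<Omega> - 2 * pi * real_of_int (n mod int N) / real N = (\<Omega> - 2 * pi * real_of_int n / real N) + 2 * pi * real_of_int (n div int N)"
    unfolding m using N by (simp add: field_simps)
  show ?thesis unfolding dft_coeff_def h dirichlet_shift by (rule refl)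
qed

lemma sin_shift_sq:
  assumes "j \<in> \<int>" shows "sin (pi * (x - j))^2 = sin (pi * x)^2"
proof -
  have s0: "sin (j * pi) = 0" using assms by (simp add: sin_times_pi_eq_0)
  then have c1: "cos (pi * j)^2 = 1" using sin_cos_squared_add[of "pi*j"] by (simp add: mult.commute)
  have "sin (pi * (x - j)) = sin (pi*x) * cos (pi*j) - cos (pi*x) * sin (pi*j)"
    by (simp add: right_diff_distrib sin_diff)
  also have "\<dots> = sin (pi*x) * cos (pi*j)" using s0 by (simp add: mult.commute)
  finally show ?thesis using c1 by (simp add: power_mult_distrib)
qed

lemma sum4: fixes f :: "int \<Rightarrow> real"
  shows "(\<Sum>n\<in>{a..a+3}. f n) = f a + f (a+1) + f (a+2) + f (a+3)"
proof -
  have "{a..a+3} = {a, a+1, a+2, a+3}" by auto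
  then show ?thesis by simp
qed

lemma final_sum:
  fixes d :: real assumes d: "0 < d" "d \<le> 1/2"
  shows "80 / (9 * pi^2) \<le> sin (pi*d)^2/(pi^2*d^2) + sin (pi*d)^2/(pi^2*(1+d)^2) + sin (pi*d)^2/(pi^2*(1-d)^2) + sin (pi*d)^2/(pi^2*(2-d)^2)"
proof -
  have "sin (pi*d)^2/(pi^2*d^2) + sin (pi*d)^2/(pi^2*(1+d)^2) + sin (pi*d)^2/(pi^2*(1-d)^2) + sin (pi*d)^2/(pi^2*(2-d)^2)
      = (sin (pi*d)^2 * (1/d^2 + 1/(1+d)^2 + 1/(1-d)^2 + 1/(2-d)^2)) / pi^2"
    by (simp add: field_simps)
  moreover have "80/9 / pi^2 \<le> (sin (pi*d)^2 * (1/d^2 + 1/(1+d)^2 + 1/(1-d)^2 + 1/(2-d)^2)) / pi^2"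
    using keyS[OF d] by (intro divide_right_mono) auto
  ultimately show ?thesis by simp
qed

theorem mainTheorem2:
  fixes N :: nat and \<Omega> :: real
  assumes "N \<ge> 4" and "-pi \<le> \<Omega>" and "\<Omega> \<le> pi"
  shows "energy4 N \<Omega> \<ge> 80 / (9 * pi\<^sup>2) \<and> 80 / (9 * pi\<^sup>2) > (0.9::real)"
proof -
  have N0: "N > 0" using assms by simp
  define v where "v = nu N \<Omega>"
  define n0 where "n0 = round v"
  define t where "t = v - of_int n0"
  have tb: "\<bar>t\<bar> \<le> 1/2" unfolding t_def n0_def using of_int_round_abs_le[of v] by linarith
  have p2: "98696/10000 \<le> pi^2" "pi^2 \<le> 987/100" using pi_sq_bounds by auto
  have second: "80 / (9 * pi\<^sup>2) > (0.9::real)" using p2 by (simp add: field_simps)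
  have E: "energy4 N \<Omega> = (\<Sum>n\<in>window4 N \<Omega>. cmod (dft_coeff N \<Omega> n)^2)"
    unfolding energy4_def by (simp add: dft_mod[OF N0])
  have W: "window4 N \<Omega> = (if t \<ge> 0 then {n0-1..(n0-1)+3} else {n0-2..(n0-2)+3})"
    unfolding window4_def Let_def t_def n0_def v_def[symmetric] by (auto simp: algebra_simps)
  have first: "80 / (9 * pi\<^sup>2) \<le> (\<Sum>n\<in>window4 N \<Omega>. cmod (dft_coeff N \<Omega> n)^2)"
  proof (cases "t = 0")
    case True
    have inW: "n0 \<in> window4 N \<Omega>" unfolding W using True by auto
    have "\<Omega> - 2 * pi * real_of_int n0 / real N = 0"
      using True N0 unfolding t_def v_def nu_def by (simp add: field_simps)
    then have y1: "cmod (dft_coeff N \<Omega> n0)^2 = 1" unfolding dft_coeff_def dirichlet_def using N0 by simp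
    have "80 / (9 * pi\<^sup>2) \<le> 1" using p2 by (simp add: field_simps)
    also have "\<dots> \<le> (\<Sum>n\<in>window4 N \<Omega>. cmod (dft_coeff N \<Omega> n)^2)"
      using member_le_sum[of n0 "window4 N \<Omega>" "\<lambda>n. cmod (dft_coeff N \<Omega> n)^2"] inW y1
      unfolding W by auto
    finally show ?thesis .
  next
    case False
    define d where "d = \<bar>t\<bar>"
    have d: "0 < d" "d \<le> 1/2" using False tb by (auto simp: d_def)
    have tni: "t \<notin> \<int>"
    proof
      assume "t \<in> \<int>"
      then obtain k where k: "t = of_int k" by (auto elim: Ints_cases)
      then have "\<bar>k\<bar> \<le> 0" using tb by linarith
      then show False using False k by simp
    qed
    have bnd: "sin (pi*d)^2 / (pi^2 * (t - of_int j)^2) \<le> cmod (dft_coeff N \<Omega> (n0 + j))^2" for j :: int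
    proof -
      have e: "v - of_int (n0 + j) = t - of_int j" unfolding t_def by simp
      have ni: "nu N \<Omega> - of_int (n0 + j) \<notin> \<int>"
      proof
        assume "nu N \<Omega> - of_int (n0 + j) \<in> \<int>"
        then have "(t - of_int j) + of_int j \<in> \<int>" using e unfolding v_def by (metis Ints_add Ints_of_int)
        then show False using tni by simp
      qed
      have "sin (pi * (t - of_int j))^2 = sin (pi * t)^2" by (rule sin_shift_sq) simp
      also have "\<dots> = sin (pi*d)^2" unfolding d_def by (cases "t \<ge> 0") (auto simp: power2_eq_square)
      finally have ss: "sin (pi * (t - of_int j))^2 = sin (pi*d)^2" .
      have e': "nu N \<Omega> - of_int (n0 + j) = t - of_int j" using e unfolding v_def .
      show ?thesis using y_lower[OF N0 ni] unfolding e' ss .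
    qed
    show ?thesis
    proof (cases "t \<ge> 0")
      case True
      then have td: "t = d" by (simp add: d_def)
      have "80 / (9 * pi\<^sup>2) \<le> sin (pi*d)^2/(pi^2*d^2) + sin (pi*d)^2/(pi^2*(1+d)^2) + sin (pi*d)^2/(pi^2*(1-d)^2) + sin (pi*d)^2/(pi^2*(2-d)^2)"
        by (rule final_sum[OF d])
      also have "\<dots> = sin (pi*d)^2 / (pi^2 * (t - of_int (-1))^2) + sin (pi*d)^2 / (pi^2 * (t - of_int 0)^2)
          + sin (pi*d)^2 / (pi^2 * (t - of_int 1)^2) + sin (pi*d)^2 / (pi^2 * (t - of_int 2)^2)"
        unfolding td by (simp add: power2_commute add.commute)
      also have "\<dots> \<le> cmod (dft_coeff N \<Omega> (n0 + -1))^2 + cmod (dft_coeff N \<Omega> (n0 + 0))^2 + cmod (dft_coeff N \<Omega> (n0 + 1))^2 + cmod (dft_coeff N \<Omega> (n0 + 2))^2"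
        by (intro add_mono bnd)
      also have "\<dots> = (\<Sum>n\<in>{n0 + (-1)..(n0 + (-1))+3}. cmod (dft_coeff N \<Omega> n)^2)"
        by (subst sum4) (simp add: algebra_simps)
      also have "\<dots> = (\<Sum>n\<in>window4 N \<Omega>. cmod (dft_coeff N \<Omega> n)^2)"
        unfolding W using True by simp
      finally show ?thesis .
    next
      case False
      then have td: "t = - d" by (simp add: d_def)
      have "80 / (9 * pi\<^sup>2) \<le> sin (pi*d)^2/(pi^2*d^2) + sin (pi*d)^2/(pi^2*(1+d)^2) + sin (pi*d)^2/(pi^2*(1-d)^2) + sin (pi*d)^2/(pi^2*(2-d)^2)"
        by (rule final_sum[OF d])
      also have "\<dots> = sin (pi*d)^2 / (pi^2 * (t - of_int (-2))^2) + sin (pi*d)^2 / (pi^2 * (t - of_int (-1))^2)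
          + sin (pi*d)^2 / (pi^2 * (t - of_int 0)^2) + sin (pi*d)^2 / (pi^2 * (t - of_int 1)^2)"
      proof -
        have "(- d - of_int (-2))^2 = (2-d)^2" "(- d - of_int (-1))^2 = (1-d)^2" "(- d - of_int 0)^2 = d^2"
          "(- d - of_int 1)^2 = (1+d)^2" by (simp_all add: power2_eq_square algebra_simps)
        then show ?thesis unfolding td by simp
      qed
      also have "\<dots> \<le> cmod (dft_coeff N \<Omega> (n0 + -2))^2 + cmod (dft_coeff N \<Omega> (n0 + -1))^2 + cmod (dft_coeff N \<Omega> (n0 + 0))^2 + cmod (dft_coeff N \<Omega> (n0 + 1))^2"
        by (intro add_mono bnd)
      also have "\<dots> = (\<Sum>n\<in>{n0 + (-2)..(n0 + (-2))+3}. cmod (dft_coeff N \<Omega> n)^2)"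
        by (subst sum4) (simp add: algebra_simps)
      also have "\<dots> = (\<Sum>n\<in>window4 N \<Omega>. cmod (dft_coeff N \<Omega> n)^2)"
        unfolding W using False by simp
      finally show ?thesis .
    qed
  qed
  show ?thesis using first second E by simp
qed

end
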